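(* Let $R$ be a ranking profile over $m$ candidates and $\rhd$ the ranking chosen by the Proportional Sequential Borda rule for $R$. Then for every subprofile $S$ of $R$ with $|S|>0$, $$\frac{1}{|S|}\sum_{\succ\in\mathcal{R}}S(\succ)\,u(\succ,\rhd)\geq\binom{m}{2}\frac{|S|}{4}-\frac{3}{16}.$$
   Context: Let $C$ be a set of $m$ candidates. A ranking is a strict linear order over $C$; $\mathcal{R}$ denotes the set of all rankings over $C$. A ranking profile is a function $R:\mathcal{R}\to[0,1]$ with $\sum_{\succ}R(\succ)=1$. A subprofile of $R$ is a function $S:\mathcal{R}\to[0,1]$ with $S(\succ)\leq R(\succ)$ for all $\succ$; $|S|=\sum_{\succ}S(\succ)$. For rankings $\succ,\rhd$, $u(\succ,\rhd)=|\{(x,y)\in C^2: x\succ y\text{ and }x\rhd y\}|$; for $x\in X\subseteq C$, $u(\succ,x,X)=|\{y\in X\setminus\{x\}: x\succ y\}|$; for $b:\mathcal{R}\to\mathbb{R}_{\geq0}$, $U(b,x,X)=\sum_{\succ}b(\succ)u(\succ,x,X)$. Proportional Sequential Borda rule: set $X_1=C$, $b_1(\succ)=R(\succ)\binom{m}{2}$. For $i=1,\dots,m$: choose $x^*\in\arg\max_{x\in X_i}U(b_i,x,X_i)$ (ties broken arbitrarily), place $x^*$ at position $i$, set $X_{i+1}=X_i\setminus\{x^*\}$ and $b_{i+1}(\succ)=b_i(\succ)-\min\!\big(\frac{(m-i)u(\succ,x^*,X_i)b_i(\succ)}{U(b_i,x^*,X_i)},b_i(\succ)\big)$ (convention $0/0=0$).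 *)

theory Defs
  imports Complex_Main
begin

text \<open>Candidates form a finite set C. A ranking (strict linear order over C) is
represented by the list of the candidates from best to worst.\<close>

definition rankings :: "'a set \<Rightarrow> 'a list set" where
  "rankings C = {xs. distinct xs \<and> set xs = C}"

definition prefers :: "'a list \<Rightarrow> 'a \<Rightarrow> 'a \<Rightarrow> bool" where
  "prefers r x y \<longleftrightarrow> (\<exists>i j. i < j \<and> j < length r \<and> r ! i = x \<and> r ! j = y)"

definition is_profile :: "'a set \<Rightarrow> ('a list \<Rightarrow> real) \<Rightarrow> bool" where
  "is_profile C R \<longleftrightarrow> (\<forall>r\<in>rankings C. 0 \<le> R r \<and> R r \<le> 1) \<and> (\<Sum>r\<in>rankings C. R r) = 1"

definition is_subprofile :: "'a set \<Rightarrow> ('a list \<Rightarrow> real) \<Rightarrow> ('a list \<Rightarrow> real) \<Rightarrow> bool" where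
  "is_subprofile C R S \<longleftrightarrow> (\<forall>r\<in>rankings C. 0 \<le> S r \<and> S r \<le> R r)"

definition psize :: "'a set \<Rightarrow> ('a list \<Rightarrow> real) \<Rightarrow> real" where
  "psize C S = (\<Sum>r\<in>rankings C. S r)"

definition agree :: "'a set \<Rightarrow> 'a list \<Rightarrow> 'a list \<Rightarrow> nat" where
  "agree C r t = card {(x, y) \<in> C \<times> C. prefers r x y \<and> prefers t x y}"

definition uX :: "'a list \<Rightarrow> 'a \<Rightarrow> 'a set \<Rightarrow> nat" where
  "uX r x X = card {y \<in> X - {x}. prefers r x y}"

definition UX :: "'a set \<Rightarrow> ('a list \<Rightarrow> real) \<Rightarrow> 'a \<Rightarrow> 'a set \<Rightarrow> real" where
  "UX C b x X = (\<Sum>r\<in>rankings C. b r * real (uX r x X))"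

definition psb_update :: "'a set \<Rightarrow> ('a list \<Rightarrow> real) \<Rightarrow> nat \<Rightarrow> 'a \<Rightarrow> 'a set \<Rightarrow> ('a list \<Rightarrow> real)" where
  "psb_update C b i x X = (\<lambda>r. b r - min ((real (card C) - real i) * real (uX r x X) * b r / UX C b x X) (b r))"

text \<open>psb_run C b i X t: the list t is a possible (arbitrary tie-breaking) continuation of the
Proportional Sequential Borda rule, starting at position i with remaining candidates X and
budgets b.  Division by zero yields 0 in Isabelle, matching the convention 0/0 = 0.\<close>
fun psb_run :: "'a set \<Rightarrow> ('a list \<Rightarrow> real) \<Rightarrow> nat \<Rightarrow> 'a set \<Rightarrow> 'a list \<Rightarrow> bool" where
  "psb_run C b i X [] \<longleftrightarrow> X = {}"
| "psb_run C b i X (x # xs) \<longleftrightarrow>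
     x \<in> X \<and> (\<forall>y\<in>X. UX C b y X \<le> UX C b x X) \<and>
     psb_run C (psb_update C b i x X) (Suc i) (X - {x}) xs"

definition psb_outcome :: "'a set \<Rightarrow> ('a list \<Rightarrow> real) \<Rightarrow> 'a list \<Rightarrow> bool" where
  "psb_outcome C R t \<longleftrightarrow> psb_run C (\<lambda>r. R r * real (card C choose 2)) 1 C t"

end

theory Submission
  imports Defs
begin

lemma prefers_Nil[simp]: "\<not> prefers [] a b"
  by (simp add: prefers_def)

lemma prefers_Cons: "prefers (x#xs) a b \<longleftrightarrow> (a = x \<and> b \<in> set xs) \<or> prefers xs a b"
proof
  assume "prefers (x#xs) a b"
  then obtain i j where ij: "i < j" "j < length (x#xs)" "(x#xs)!i = a" "(x#xs)!j = b"
    unfolding prefers_def by blast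
  then obtain j' where j': "j = Suc j'" by (cases j) auto
  show "(a = x \<and> b \<in> set xs) \<or> prefers xs a b"
  proof (cases i)
    case 0
    then show ?thesis using ij j' by auto
  next
    case (Suc i')
    then have "prefers xs a b" unfolding prefers_def using ij j'
      by (intro exI[of _ i'] exI[of _ j']) auto
    then show ?thesis by simp
  qed
next
  assume "(a = x \<and> b \<in> set xs) \<or> prefers xs a b"
  then show "prefers (x#xs) a b"
  proof
    assume "a = x \<and> b \<in> set xs"
    then obtain j where "j < length xs" "xs!j = b" "a = x" by (auto simp: in_set_conv_nth)
    then show ?thesis unfolding prefers_def by (intro exI[of _ 0] exI[of _ "Suc j"]) auto
  next
    assume "prefers xs a b"
    then obtain i j where "i < j" "j < length xs" "xs!i = a" "xs!j = b"
      unfolding prefers_def by blast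
    then show ?thesis unfolding prefers_def by (intro exI[of _ "Suc i"] exI[of _ "Suc j"]) auto
  qed
qed

lemma prefers_set: "prefers r a b \<Longrightarrow> a \<in> set r \<and> b \<in> set r"
  by (induction r) (auto simp: prefers_Cons)

lemma prefers_total: "distinct r \<Longrightarrow> a \<in> set r \<Longrightarrow> b \<in> set r \<Longrightarrow> a \<noteq> b \<Longrightarrow> prefers r a b \<or> prefers r b a"
  by (induction r) (auto simp: prefers_Cons)

lemma prefers_asym: "distinct r \<Longrightarrow> prefers r a b \<Longrightarrow> \<not> prefers r b a"
  by (induction r) (auto simp: prefers_Cons dest: prefers_set)

fun G :: "'a list \<Rightarrow> 'a set \<Rightarrow> 'a list \<Rightarrow> nat" where
  "G r X [] = 0"
| "G r X (x#xs) = uX r x X + G r (X - {x}) xs"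

lemma agree_G:
  "distinct t \<Longrightarrow> set t = X \<Longrightarrow> card {(a, c) \<in> X \<times> X. prefers r a c \<and> prefers t a c} = G r X t"
proof (induction t arbitrary: X)
  case Nil
  then show ?case by simp
next
  case (Cons x xs)
  let ?X' = "set xs"
  have X: "X = insert x ?X'" and nx: "x \<notin> ?X'" using Cons.prems by auto
  have eq: "{(a, c) \<in> X \<times> X. prefers r a c \<and> prefers (x#xs) a c}
     = Pair x ` {c \<in> ?X'. prefers r x c} \<union> {(a, c) \<in> ?X' \<times> ?X'. prefers r a c \<and> prefers xs a c}"
    using X by (auto simp: prefers_Cons dest: prefers_set)
  have "card {(a, c) \<in> X \<times> X. prefers r a c \<and> prefers (x#xs) a c}
      = card (Pair x ` {c \<in> ?X'. prefers r x c}) + card {(a, c) \<in> ?X' \<times> ?X'. prefers r a c \<and> prefers xs a c}"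
    unfolding eq
    by (rule card_Un_disjoint) (use nx in \<open>auto intro: finite_subset[of _ "?X' \<times> ?X'"]\<close>)
  also have "card (Pair x ` {c \<in> ?X'. prefers r x c}) = uX r x X"
    unfolding uX_def using X nx by (subst card_image) (auto simp: inj_on_def intro!: arg_cong[where f=card])
  also have "card {(a, c) \<in> ?X' \<times> ?X'. prefers r a c \<and> prefers xs a c} = G r ?X' xs"
    using Cons by auto
  finally show ?case using X nx by simp
qed

lemma psb_run_perm: "psb_run C b i X t \<Longrightarrow> distinct t \<and> set t = X"
  by (induction t arbitrary: b i X) auto

lemma finite_rankings: "finite C \<Longrightarrow> finite (rankings C)"
proof -
  assume f: "finite C"
  have "rankings C \<subseteq> {xs. set xs \<subseteq> C \<and> length xs \<le> card C}"
    unfolding rankings_def using distinct_card by fastforce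
  then show ?thesis using finite_lists_length_le[OF f] finite_subset by blast
qed


lemma uX_le: "finite X \<Longrightarrow> x \<in> X \<Longrightarrow> uX r x X \<le> card X - 1"
proof -
  assume "finite X" "x \<in> X"
  then have "uX r x X \<le> card (X - {x})" unfolding uX_def by (intro card_mono) auto
  then show ?thesis using \<open>finite X\<close> \<open>x \<in> X\<close> by simp
qed

lemma sum_uX:
  assumes r: "distinct r" "set r = C" and X: "finite X" "X \<subseteq> C"
  shows "(\<Sum>y\<in>X. real (uX r y X)) = real (card X) * (real (card X) - 1) / 2"
  using X
proof (induction X rule: finite_induct)
  case empty
  then show ?case by simp
next
  case (insert a X)
  have aC: "a \<in> set r" and XC: "X \<subseteq> set r" using insert r by auto
  have ua: "uX r a (insert a X) = card {z \<in> X. prefers r a z}"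
    unfolding uX_def using insert by (intro arg_cong[where f=card]) auto
  have uy: "uX r y (insert a X) = uX r y X + (if prefers r y a then 1 else 0)" if y: "y \<in> X" for y
  proof -
    have ya: "y \<noteq> a" using y insert by auto
    show ?thesis
    proof (cases "prefers r y a")
      case True
      have "{z \<in> insert a X - {y}. prefers r y z} = insert a {z \<in> X - {y}. prefers r y z}"
        using True ya by auto
      then show ?thesis unfolding uX_def using True insert by (simp add: card_insert_if)
    next
      case False
      have "{z \<in> insert a X - {y}. prefers r y z} = {z \<in> X - {y}. prefers r y z}"
        using False ya by auto
      then show ?thesis unfolding uX_def using False by simp
    qed
  qed
  have part: "card {z \<in> X. prefers r a z} + card {y \<in> X. prefers r y a} = card X"
  proof -
    have d: "{z \<in> X. prefers r a z} \<inter> {y \<in> X. prefers r y a} = {}"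
      using prefers_asym[OF r(1)] by blast
    have u: "{z \<in> X. prefers r a z} \<union> {y \<in> X. prefers r y a} = X"
      using prefers_total[OF r(1) aC] XC insert by blast
    show ?thesis using card_Un_disjoint[of "{z \<in> X. prefers r a z}" "{y \<in> X. prefers r y a}"] d u insert
      by simp
  qed
  have "(\<Sum>y\<in>insert a X. real (uX r y (insert a X)))
      = real (uX r a (insert a X)) + (\<Sum>y\<in>X. real (uX r y (insert a X)))"
    using insert by simp
  also have "(\<Sum>y\<in>X. real (uX r y (insert a X))) = (\<Sum>y\<in>X. real (uX r y X)) + (\<Sum>y\<in>X. (if prefers r y a then 1 else 0::real))"
    unfolding sum.distrib[symmetric] by (intro sum.cong) (auto simp: uy)
  also have "(\<Sum>y\<in>X. (if prefers r y a then 1 else 0::real)) = real (card {y \<in> X. prefers r y a})"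
    using insert by (simp add: sum.If_cases Int_def conj_commute)
  finally have "(\<Sum>y\<in>insert a X. real (uX r y (insert a X))) = real (card X) + real (card X) * (real (card X) - 1) / 2"
    using ua part insert by (simp add: of_nat_add[symmetric] del: of_nat_add)
  then show ?case using insert by (simp add: field_simps)
qed


lemma choose2_real: "real (n choose 2) = real n * (real n - 1) / 2"
  by (induction n) (auto simp: numeral_2_eq_2 field_simps)

lemma UX_avg:
  assumes fin: "finite C" and XC: "X \<subseteq> C" and ne: "X \<noteq> {}"
    and w: "\<forall>r\<in>rankings C. 0 \<le> w r \<and> w r \<le> b r"
    and max: "\<forall>y\<in>X. UX C b y X \<le> UX C b x X"
  shows "(\<Sum>r\<in>rankings C. w r) * (real (card X) - 1) / 2 \<le> UX C b x X"
proof -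
  have fX: "finite X" using fin XC finite_subset by blast
  let ?n = "real (card X)"
  have npos: "?n > 0" using fX ne by (simp add: card_gt_0_iff)
  have "(\<Sum>y\<in>X. UX C w y X) = (\<Sum>r\<in>rankings C. w r * (\<Sum>y\<in>X. real (uX r y X)))"
    unfolding UX_def by (simp add: sum_distrib_left sum.swap[of _ X])
  also have "\<dots> = (\<Sum>r\<in>rankings C. w r * (?n * (?n - 1) / 2))"
    by (intro sum.cong refl) (use sum_uX fX XC in \<open>auto simp: rankings_def\<close>)
  also have "\<dots> = (\<Sum>r\<in>rankings C. w r) * (?n * (?n - 1) / 2)"
    by (simp add: sum_distrib_right)
  finally have eq: "(\<Sum>y\<in>X. UX C w y X) = (\<Sum>r\<in>rankings C. w r) * (?n * (?n - 1) / 2)" .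
  have "(\<Sum>y\<in>X. UX C w y X) \<le> (\<Sum>y\<in>X. UX C b x X)"
  proof (intro sum_mono)
    fix y assume y: "y \<in> X"
    have "UX C w y X \<le> UX C b y X"
      unfolding UX_def by (intro sum_mono mult_right_mono) (use w in auto)
    then show "UX C w y X \<le> UX C b x X" using max y by auto
  qed
  then have "(\<Sum>r\<in>rankings C. w r) * (?n * (?n - 1) / 2) \<le> ?n * UX C b x X"
    using eq by simp
  then have "?n * ((\<Sum>r\<in>rankings C. w r) * (?n - 1) / 2) \<le> ?n * UX C b x X"
    by (simp add: algebra_simps)
  then show ?thesis using npos by (simp add: mult_le_cancel_left)
qed

definition Mf :: "'a set \<Rightarrow> ('a list \<Rightarrow> real) \<Rightarrow> ('a list \<Rightarrow> real) \<Rightarrow> ('a list \<Rightarrow> real) \<Rightarrow> real" where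
  "Mf C R S b = (\<Sum>r\<in>rankings C. S r * b r / R r)"

definition Bf :: "'a set \<Rightarrow> ('a list \<Rightarrow> real) \<Rightarrow> real" where
  "Bf C b = (\<Sum>r\<in>rankings C. b r)"

definition Inv :: "nat \<Rightarrow> real \<Rightarrow> bool" where
  "Inv n B \<longleftrightarrow> (3 \<le> n \<longrightarrow> B = real n * (real n - 1) / 2) \<and> (n = 2 \<longrightarrow> B \<le> 3/2) \<and> (n \<le> 1 \<longrightarrow> B \<le> 3/4)"

context
  fixes C :: "'a set" and R S b :: "'a list \<Rightarrow> real" and i :: nat and X :: "'a set" and x :: 'a
  assumes fin: "finite C" and sub: "is_subprofile C R S"
    and XC: "X \<subseteq> C" and xX: "x \<in> X" and max: "\<forall>y\<in>X. UX C b y X \<le> UX C b x X"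
    and cardX: "card X + i = card C + 1"
    and bnd: "\<forall>r\<in>rankings C. 0 \<le> b r \<and> b r \<le> real (card C choose 2) * R r"
begin

lemma fX: "finite X" using fin XC finite_subset by blast

lemma k_eq: "real (card C) - real i = real (card X) - 1"
proof -
  have "real (card X + i) = real (card C + 1)" using cardX by simp
  then show ?thesis by simp
qed

lemma cardX_pos: "1 \<le> card X"
  using xX fX by (metis One_nat_def Suc_leI card_gt_0_iff empty_iff)

lemma k_nonneg: "real (card X) - 1 \<ge> 0"
  using cardX_pos by simp

lemma U_nonneg: "0 \<le> UX C b x X"
  unfolding UX_def using bnd by (intro sum_nonneg) auto

lemma u_le: "real (uX r x X) \<le> real (card X) - 1"
proof -
  have "uX r x X \<le> card X - 1" using uX_le[OF fX xX, of r] .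
  then have "real (uX r x X) \<le> real (card X - 1)" by linarith
  then show ?thesis using cardX_pos by (simp add: of_nat_diff)
qed

lemma upd_eq: "psb_update C b i x X r = b r - min ((real (card X) - 1) * real (uX r x X) * b r / UX C b x X) (b r)"
  unfolding psb_update_def k_eq ..

lemma upd_bnd: "r \<in> rankings C \<Longrightarrow> 0 \<le> psb_update C b i x X r \<and> psb_update C b i x X r \<le> b r"
  unfolding upd_eq using bnd k_nonneg U_nonneg
  by (auto intro!: divide_nonneg_nonneg mult_nonneg_nonneg simp: min_def)

lemma B_step: "Bf C (psb_update C b i x X) = Bf C b - (\<Sum>r\<in>rankings C. min ((real (card X) - 1) * real (uX r x X) * b r / UX C b x X) (b r))"
  unfolding Bf_def upd_eq by (simp add: sum_subtractf)

lemma pay_le: "(\<Sum>r\<in>rankings C. min ((real (card X) - 1) * real (uX r x X) * b r / UX C b x X) (b r)) \<le> real (card X) - 1"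
proof -
  let ?k = "real (card X) - 1" and ?U = "UX C b x X"
  have "(\<Sum>r\<in>rankings C. min (?k * real (uX r x X) * b r / ?U) (b r)) \<le> (\<Sum>r\<in>rankings C. ?k * real (uX r x X) * b r / ?U)"
    by (intro sum_mono) auto
  also have "\<dots> = ?k * ?U / ?U"
    unfolding UX_def by (simp add: sum_divide_distrib[symmetric] sum_distrib_left mult.commute mult.left_commute)
  also have "\<dots> \<le> ?k" using k_nonneg by (cases "?U = 0") auto
  finally show ?thesis .
qed

lemma pay_ge:
  assumes k1: "2 \<le> card X"
  shows "min (real (card X) - 1) (UX C b x X / (real (card X) - 1)) \<le> (\<Sum>r\<in>rankings C. min ((real (card X) - 1) * real (uX r x X) * b r / UX C b x X) (b r))"
proof -
  let ?k = "real (card X) - 1" and ?U = "UX C b x X"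
  have kpos: "?k \<ge> 1" using k1 by simp
  let ?c = "min (?k / ?U) (1 / ?k)"
  have "?U * ?c = (\<Sum>r\<in>rankings C. b r * real (uX r x X) * ?c)"
    unfolding UX_def by (simp add: sum_distrib_right)
  also have "\<dots> \<le> (\<Sum>r\<in>rankings C. min (?k * real (uX r x X) * b r / ?U) (b r))"
  proof (intro sum_mono)
    fix r assume r: "r \<in> rankings C"
    have b0: "0 \<le> b r" using bnd r by auto
    have u0: "0 \<le> real (uX r x X)" by simp
    have "b r * real (uX r x X) * ?c \<le> b r * real (uX r x X) * (?k / ?U)"
      by (intro mult_left_mono) (use b0 in auto)
    also have "\<dots> = ?k * real (uX r x X) * b r / ?U" by simp
    finally have A: "b r * real (uX r x X) * ?c \<le> ?k * real (uX r x X) * b r / ?U" .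
    have "b r * real (uX r x X) * ?c \<le> b r * real (uX r x X) * (1 / ?k)"
      by (intro mult_left_mono) (use b0 in auto)
    also have "\<dots> = b r * (real (uX r x X) / ?k)" by simp
    also have "\<dots> \<le> b r * 1"
      by (intro mult_left_mono) (use b0 u_le[of r] kpos in \<open>auto simp: divide_le_eq\<close>)
    finally have B: "b r * real (uX r x X) * ?c \<le> b r" by simp
    show "b r * real (uX r x X) * ?c \<le> min (?k * real (uX r x X) * b r / ?U) (b r)"
      using A B by simp
  qed
  finally have *: "?U * ?c \<le> (\<Sum>r\<in>rankings C. min (?k * real (uX r x X) * b r / ?U) (b r))" .
  have "?U * ?c = min (?U * (?k / ?U)) (?U * (1 / ?k))"
    using U_nonneg by (simp add: min_mult_distrib_left)
  also have "\<dots> = min ?k (?U / ?k)"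
  proof (cases "?U = 0")
    case True then show ?thesis using kpos by simp
  next
    case False then show ?thesis by simp
  qed
  finally show ?thesis using * by simp
qed

lemma Inv_step:
  assumes inv: "Inv (card X) (Bf C b)"
  shows "Inv (card X - 1) (Bf C (psb_update C b i x X))"
proof -
  let ?k = "real (card X) - 1" and ?U = "UX C b x X" and ?B = "Bf C b"
  let ?P = "(\<Sum>r\<in>rankings C. min (?k * real (uX r x X) * b r / ?U) (b r))"
  have Uge: "?B * ?k / 2 \<le> ?U"
    using UX_avg[OF fin XC _ _ max, of b] xX bnd unfolding Bf_def by auto
  have Bst: "Bf C (psb_update C b i x X) = ?B - ?P" by (rule B_step)
  consider "card X = 1" | "card X = 2" | "card X = 3" | "4 \<le> card X" using cardX_pos by linarith
  then show ?thesis
  proof cases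
    case 1
    have "?P = 0" using 1 bnd by (intro sum.neutral) auto
    then show ?thesis using inv 1 Bst unfolding Inv_def by simp
  next
    case 2
    have "min 1 ?U \<le> ?P" using pay_ge 2 by simp
    moreover have "?B \<le> 3/2" using inv 2 unfolding Inv_def by simp
    moreover have "?B / 2 \<le> ?U" using Uge 2 by simp
    ultimately have "?B - ?P \<le> 3/4" by linarith
    then show ?thesis using Bst 2 unfolding Inv_def by simp
  next
    case 3
    have "min 2 (?U / 2) \<le> ?P" using pay_ge 3 by simp
    moreover have "?B = 3" using inv 3 unfolding Inv_def by simp
    moreover have "?B \<le> ?U" using Uge 3 by simp
    ultimately have "?B - ?P \<le> 3/2" by linarith
    then show ?thesis using Bst 3 unfolding Inv_def by simp
  next
    case 4
    let ?n = "real (card X)"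
    have n4: "?n \<ge> 4" using 4 by simp
    have B: "?B = ?n * (?n - 1) / 2" using inv 4 unfolding Inv_def by simp
    have k3: "?k \<ge> 3" using n4 by simp
    have "4 * (?k * ?k) \<le> ?n * (?k * ?k)" by (rule mult_right_mono) (use n4 in auto)
    then have "?k * ?k \<le> ?B * ?k / 2" unfolding B by (simp add: algebra_simps)
    then have kk: "?k * ?k \<le> ?U" using Uge by linarith
    have "?k \<le> ?U / ?k" using kk k3 by (simp add: le_divide_eq)
    then have mk: "min ?k (?U / ?k) = ?k" by simp
    have "?k \<le> ?P" using pay_ge[of] 4 mk by fastforce
    then have "?P = ?k" using pay_le by linarith
    then have "Bf C (psb_update C b i x X) = ?n * (?n - 1) / 2 - (?n - 1)" using Bst B by simp
    also have "\<dots> = (?n - 1) * ((?n - 1) - 1) / 2" by (simp add: field_simps)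
    finally have fin1: "Bf C (psb_update C b i x X) = (?n - 1) * ((?n - 1) - 1) / 2" .
    have eqn: "real (card X - 1) = ?n - 1" using 4 by (simp add: of_nat_diff)
    have c: "3 \<le> card X - 1" "card X - 1 \<noteq> 2" "\<not> (card X - 1 \<le> 1)" using 4 by auto
    show ?thesis unfolding Inv_def
    proof (intro conjI impI)
      show "Bf C (psb_update C b i x X) = real (card X - 1) * (real (card X - 1) - 1) / 2"
        unfolding eqn by (rule fin1)
    qed (use c in auto)
  qed
qed

lemma w_bnd: "r \<in> rankings C \<Longrightarrow> 0 \<le> S r * b r / R r \<and> S r * b r / R r \<le> b r \<and> S r * b r / R r \<le> real (card C choose 2) * S r"
proof -
  assume r: "r \<in> rankings C"
  have S: "0 \<le> S r" "S r \<le> R r" using sub r unfolding is_subprofile_def by auto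
  have b: "0 \<le> b r" "b r \<le> real (card C choose 2) * R r" using bnd r by auto
  show ?thesis
  proof (cases "R r = 0")
    case True then show ?thesis using S b by simp
  next
    case False
    then have Rp: "R r > 0" using S by linarith
    have 1: "S r * b r / R r \<le> b r"
      using Rp S b by (simp add: divide_le_eq mult_right_mono mult.commute)
    have 2: "S r * b r / R r \<le> real (card C choose 2) * S r"
    proof -
      have "S r * b r \<le> S r * (real (card C choose 2) * R r)" using S b by (intro mult_left_mono) auto
      then show ?thesis using Rp by (simp add: divide_le_eq algebra_simps)
    qed
    show ?thesis using 1 2 S b Rp by simp
  qed
qed

lemma key:
  "(Mf C R S b - Mf C R S (psb_update C b i x X)) * Mf C R S b
     \<le> 2 * real (card C choose 2) * (\<Sum>r\<in>rankings C. S r * real (uX r x X))"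
proof -
  let ?k = "real (card X) - 1" and ?U = "UX C b x X" and ?K = "real (card C choose 2)"
  let ?M = "Mf C R S b" and ?M' = "Mf C R S (psb_update C b i x X)"
  let ?g = "\<Sum>r\<in>rankings C. S r * real (uX r x X)"
  have S0: "\<And>r. r \<in> rankings C \<Longrightarrow> 0 \<le> S r" using sub unfolding is_subprofile_def by auto
  have g0: "0 \<le> ?g" using S0 by (intro sum_nonneg) auto
  have M0: "0 \<le> ?M" unfolding Mf_def using w_bnd by (intro sum_nonneg) auto
  have "?M - ?M' = (\<Sum>r\<in>rankings C. S r * min (?k * real (uX r x X) * b r / ?U) (b r) / R r)"
    unfolding Mf_def upd_eq sum_subtractf[symmetric]
    by (intro sum.cong refl) (simp add: diff_divide_distrib[symmetric] right_diff_distrib)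
  also have "\<dots> \<le> (\<Sum>r\<in>rankings C. S r * (?k * real (uX r x X) * b r / ?U) / R r)"
  proof (intro sum_mono)
    fix r assume r: "r \<in> rankings C"
    have "0 \<le> R r" using sub r unfolding is_subprofile_def by force
    then show "S r * min (?k * real (uX r x X) * b r / ?U) (b r) / R r \<le> S r * (?k * real (uX r x X) * b r / ?U) / R r"
      using S0[OF r] by (intro divide_right_mono mult_left_mono) auto
  qed
  also have "\<dots> = (\<Sum>r\<in>rankings C. (?k / ?U) * (real (uX r x X) * (S r * b r / R r)))"
    by (intro sum.cong refl) (simp add: mult_ac)
  also have "\<dots> \<le> (\<Sum>r\<in>rankings C. (?k / ?U) * (real (uX r x X) * (?K * S r)))"
  proof (rule sum_mono)
    fix r assume r: "r \<in> rankings C"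
    have "real (uX r x X) * (S r * b r / R r) \<le> real (uX r x X) * (?K * S r)"
      using w_bnd[OF r] by (intro mult_left_mono) auto
    moreover have "0 \<le> ?k / ?U" using k_nonneg U_nonneg by simp
    ultimately show "(?k / ?U) * (real (uX r x X) * (S r * b r / R r)) \<le> (?k / ?U) * (real (uX r x X) * (?K * S r))"
      by (rule mult_left_mono)
  qed
  also have "\<dots> = (?k / ?U) * ?K * ?g"
    by (simp add: sum_distrib_left sum_divide_distrib mult_ac)
  finally have D: "?M - ?M' \<le> (?k / ?U) * ?K * ?g" .
  show ?thesis
  proof (cases "?M = 0 \<or> ?k = 0")
    case True
    then show ?thesis
    proof
      assume "?M = 0" then show ?thesis using g0 by simp
    next
      assume "?k = 0"
      then have "?M - ?M' \<le> 0" using D by simp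
      then have "(?M - ?M') * ?M \<le> 0" using M0 by (rule mult_nonpos_nonneg)
      moreover have "0 \<le> 2 * ?K * ?g" using g0 by simp
      ultimately show ?thesis by linarith
    qed
  next
    case False
    then have Mp: "?M > 0" and kp: "?k > 0" using M0 k_nonneg by auto
    have Uge: "?M * ?k / 2 \<le> ?U"
      using UX_avg[OF fin XC _ _ max, of "\<lambda>r. S r * b r / R r"] xX w_bnd unfolding Mf_def by auto
    have "0 < ?M * ?k / 2" using Mp kp by simp
    then have Up: "?U > 0" using Uge by linarith
    have "(?M - ?M') * ?M \<le> ((?k / ?U) * ?K * ?g) * ?M"
      using D Mp by (intro mult_right_mono) auto
    also have "\<dots> = (?k * ?M / ?U) * (?K * ?g)" by (simp add: mult_ac)
    also have "\<dots> \<le> 2 * (?K * ?g)"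
    proof (intro mult_right_mono)
      show "?k * ?M / ?U \<le> 2" using Uge Up by (simp add: divide_le_eq mult.commute)
      show "0 \<le> ?K * ?g" using g0 by simp
    qed
    finally show ?thesis by (simp add: mult_ac)
  qed
qed

end


lemma main_ind:
  assumes fin: "finite C" and sub: "is_subprofile C R S"
  shows "psb_run C b i X t \<Longrightarrow> X \<subseteq> C \<Longrightarrow> card X + i = card C + 1
    \<Longrightarrow> (\<forall>r\<in>rankings C. 0 \<le> b r \<and> b r \<le> real (card C choose 2) * R r)
    \<Longrightarrow> Inv (card X) (Bf C b)
    \<Longrightarrow> (Mf C R S b)^2 - 3/4 * real (card C choose 2) * psize C S
        \<le> 4 * real (card C choose 2) * (\<Sum>r\<in>rankings C. S r * real (G r X t))"
proof (induction t arbitrary: b i X)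
  case Nil
  let ?K = "real (card C choose 2)" and ?M = "Mf C R S b"
  have X: "X = {}" using Nil by simp
  have B: "Bf C b \<le> 3/4" using Nil(5) X unfolding Inv_def by simp
  have S0: "\<And>r. r \<in> rankings C \<Longrightarrow> 0 \<le> S r \<and> S r \<le> R r" using sub unfolding is_subprofile_def by auto
  have w: "\<And>r. r \<in> rankings C \<Longrightarrow> 0 \<le> S r * b r / R r \<and> S r * b r / R r \<le> b r \<and> S r * b r / R r \<le> ?K * S r"
  proof -
    fix r assume r: "r \<in> rankings C"
    show "0 \<le> S r * b r / R r \<and> S r * b r / R r \<le> b r \<and> S r * b r / R r \<le> ?K * S r"
    proof (cases "R r = 0")
      case True then show ?thesis using S0[OF r] Nil(4) r by simp
    next
      case False
      then have Rp: "R r > 0" using S0[OF r] by linarith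
      have b: "0 \<le> b r" "b r \<le> ?K * R r" using Nil(4) r by auto
      have 1: "S r * b r / R r \<le> b r"
        using Rp S0[OF r] b by (simp add: divide_le_eq mult_right_mono mult.commute)
      have "S r * b r \<le> S r * (?K * R r)" using S0[OF r] b by (intro mult_left_mono) auto
      then have 2: "S r * b r / R r \<le> ?K * S r" using Rp by (simp add: divide_le_eq algebra_simps)
      show ?thesis using 1 2 S0[OF r] b Rp by simp
    qed
  qed
  have M0: "0 \<le> ?M" unfolding Mf_def using w by (intro sum_nonneg) auto
  have "?M \<le> Bf C b" unfolding Mf_def Bf_def by (intro sum_mono) (use w in auto)
  then have MB: "?M \<le> 3/4" using B by linarith
  have MS: "?M \<le> ?K * psize C S" unfolding Mf_def psize_def sum_distrib_left using w
    by (intro sum_mono) auto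
  have "?M * ?M \<le> 3/4 * ?M" by (rule mult_right_mono[of ?M "3/4" ?M, OF MB M0])
  then have "?M^2 \<le> 3/4 * ?M" by (simp add: power2_eq_square)
  also have "\<dots> \<le> 3/4 * (?K * psize C S)" using MS by simp
  finally show ?case by simp
next
  case (Cons x xs)
  let ?K = "real (card C choose 2)" and ?M = "Mf C R S b"
  let ?b' = "psb_update C b i x X"
  have xX: "x \<in> X" and max: "\<forall>y\<in>X. UX C b y X \<le> UX C b x X"
    and run: "psb_run C ?b' (Suc i) (X - {x}) xs" using Cons.prems(1) by auto
  note XC = Cons.prems(2) and cardX = Cons.prems(3) and bnd = Cons.prems(4)
  have fX: "finite X" using fin XC finite_subset by blast
  have c1: "card (X - {x}) = card X - 1" using xX fX by simp
  have cpos: "1 \<le> card X" using xX fX by (metis One_nat_def Suc_leI card_gt_0_iff empty_iff)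
  have IH: "(Mf C R S ?b')^2 - 3/4 * ?K * psize C S \<le> 4 * ?K * (\<Sum>r\<in>rankings C. S r * real (G r (X - {x}) xs))"
  proof (rule Cons.IH[OF run])
    show "X - {x} \<subseteq> C" using XC by auto
    show "card (X - {x}) + Suc i = card C + 1" using c1 cardX cpos by simp
    show "\<forall>r\<in>rankings C. 0 \<le> ?b' r \<and> ?b' r \<le> ?K * R r"
      using upd_bnd[OF fin sub XC xX max cardX bnd] bnd by force
    show "Inv (card (X - {x})) (Bf C ?b')"
      using Inv_step[OF fin sub XC xX max cardX bnd Cons.prems(5)] c1 by simp
  qed
  have key: "(?M - Mf C R S ?b') * ?M \<le> 2 * ?K * (\<Sum>r\<in>rankings C. S r * real (uX r x X))"
    by (rule key[OF fin sub XC xX max cardX bnd])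
  have sq: "?M^2 - (Mf C R S ?b')^2 \<le> 2 * ((?M - Mf C R S ?b') * ?M)"
  proof -
    have e: "?M^2 - (Mf C R S ?b')^2 = 2 * ((?M - Mf C R S ?b') * ?M) - (?M - Mf C R S ?b')^2"
      by (simp add: power2_eq_square algebra_simps)
    have "0 \<le> (?M - Mf C R S ?b')^2" by simp
    then show ?thesis unfolding e by linarith
  qed
  have G: "(\<Sum>r\<in>rankings C. S r * real (G r X (x#xs))) = (\<Sum>r\<in>rankings C. S r * real (uX r x X)) + (\<Sum>r\<in>rankings C. S r * real (G r (X - {x}) xs))"
    by (simp add: sum.distrib distrib_left)
  show ?case using IH key sq G by (simp add: distrib_left)
qed


theorem mainTheorem5:
  fixes C :: "'a set" and R S :: "'a list \<Rightarrow> real" and t :: "'a list"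
  assumes "finite C"
    and "is_profile C R"
    and "psb_outcome C R t"
    and "is_subprofile C R S"
    and "psize C S > 0"
  shows "(1 / psize C S) * (\<Sum>r\<in>rankings C. S r * real (agree C r t))
           \<ge> real (card C choose 2) * psize C S / 4 - 3 / 16"
proof -
  note fin = assms(1) and prof = assms(2) and sub = assms(4) and spos = assms(5)
  let ?K = "real (card C choose 2)" and ?s = "psize C S"
  let ?b0 = "\<lambda>r. R r * ?K"
  let ?A = "\<Sum>r\<in>rankings C. S r * real (agree C r t)"
  have run: "psb_run C ?b0 1 C t" using assms(3) unfolding psb_outcome_def .
  have perm: "distinct t" "set t = C" using psb_run_perm[OF run] by auto
  have agr: "\<And>r. agree C r t = G r C t" unfolding agree_def using agree_G[OF perm] by simp
  have R0: "\<And>r. r \<in> rankings C \<Longrightarrow> 0 \<le> R r" and R1: "(\<Sum>r\<in>rankings C. R r) = 1"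
    using prof unfolding is_profile_def by auto
  have S0: "\<And>r. r \<in> rankings C \<Longrightarrow> 0 \<le> S r \<and> S r \<le> R r" using sub unfolding is_subprofile_def by auto
  have K0: "0 \<le> ?K" by simp
  have A0: "0 \<le> ?A" using S0 by (intro sum_nonneg) auto
  have bnd: "\<forall>r\<in>rankings C. 0 \<le> ?b0 r \<and> ?b0 r \<le> ?K * R r" using R0 by auto
  have Bf0: "Bf C ?b0 = ?K" unfolding Bf_def using R1 by (simp add: sum_distrib_right[symmetric])
  have c01: "card C \<le> 1 \<Longrightarrow> card C = 0 \<or> card C = 1" by auto
  have Bf0': "Bf C ?b0 = real (card C) * (real (card C) - 1) / 2" using Bf0 choose2_real by metis
  have inv: "Inv (card C) (Bf C ?b0)"
    unfolding Inv_def Bf0' using c01 by auto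
  have M0: "Mf C R S ?b0 = ?K * ?s"
    unfolding Mf_def psize_def sum_distrib_left
  proof (intro sum.cong refl)
    fix r assume r: "r \<in> rankings C"
    show "S r * (R r * ?K) / R r = ?K * S r"
      using S0[OF r] by (cases "R r = 0") auto
  qed
  have main: "(?K * ?s)^2 - 3/4 * ?K * ?s \<le> 4 * ?K * ?A"
    using main_ind[OF fin sub run _ _ bnd inv] M0 agr by simp
  show ?thesis
  proof (cases "?K = 0")
    case True
    have "0 \<le> (1 / ?s) * ?A" using A0 spos by simp
    then show ?thesis unfolding True by simp
  next
    case False
    then have Kp: "?K > 0" by simp
    have "?K * (?K * ?s * ?s - 3/4 * ?s) \<le> ?K * (4 * ?A)"
      using main by (simp add: power2_eq_square algebra_simps)
    then have "?K * ?s * ?s - 3/4 * ?s \<le> 4 * ?A" using Kp by (simp add: mult_le_cancel_left)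
    then have "?s * (?K * ?s / 4 - 3/16) \<le> ?s * (1 / ?s * ?A)" using spos by (simp add: algebra_simps)
    then have "?s * (?K * ?s / 4 - 3/16) \<le> ?A" using spos by simp
    then have "?K * ?s / 4 - 3/16 \<le> ?A / ?s" using spos by (simp add: le_divide_eq mult.commute)
    then show ?thesis by simp
  qed
qed

end
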